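(* Assume the scores are produced by a symmetric transformation. For $k\in[K^*+1]$ and $i\in(\tau^*_{k-1},\tau^*_k]$ let $R^k_i=|\{j\in(\tau^*_{k-1},\tau^*_k]:S_j\le S_i\}|$ be the rank of $S_i$ within its segment. Then the vectors $(R^k_i)_{i\in(\tau^*_{k-1},\tau^*_k]}$, $k\in[K^*+1]$, are mutually independent, and the concatenated vector $\widetilde R=(R^1_1,\ldots,R^1_{\tau^*_1},R^2_{\tau^*_1+1},\ldots,R^2_{\tau^*_2},\ldots,R^{K^*+1}_{\tau^*_{K^*}+1},\ldots,R^{K^*+1}_n)$ has the same distribution under the true law $\mathbb{P}^*$ as under $H_0$ (i.e. when $Z_1,\ldots,Z_n$ are i.i.d. with an arbitrary law).
   Context: Data: independent $Z_1,\ldots,Z_n$ in a measurable space $\mathcal{Z}$, $\mathcal{D}=(Z_1,\ldots,Z_n)$, with joint law $\mathbb{P}^*$ and $K^*\ge0$ changepoints $0=\tau^*_0<\tau^*_1<\cdots<\tau^*_{K^*}<\tau^*_{K^*+1}=n$: the $Z_i$, $i\in(\tau^*_{k-1},\tau^*_k]$, are identically distributed with law $P^*_k$, $P^*_{k+1}\ne P^*_k$. $H_0$ means $K^*=0$. A measurable $\mathbb{S}:\mathcal{Z}\times\mathcal{Z}^n\to\mathbb{R}$ is a symmetric transformation if $\mathbb{S}(z;\mathcal{D})=\mathbb{S}(z;\mathcal{D}_\pi)$ for all $z$ and all permutations $\pi$ of $[n]$, $\mathcal{D}_\pi=(Z_{\pi(1)},\ldots,Z_{\pi(n)})$. Scores: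 $S_i=\mathbb{S}(Z_i;\mathcal{D})+\epsilon e_i$, fixed $\epsilon>0$, $e_i$ i.i.d. $\mathcal{N}(0,1)$ independent of the data. *)

theory Defs
  imports "HOL-Probability.Probability"
begin

text \<open>Observations are indexed by 1..n. Changepoints tau 0 = 0 < tau 1 < ... < tau (K+1) = n.
  Segment k (k in 1..K+1) is the index set (tau (k-1), tau k].\<close>

definition seg :: "(nat \<Rightarrow> nat) \<Rightarrow> nat \<Rightarrow> nat set" where
  "seg \<tau> k = {\<tau> (k - 1)<..\<tau> k}"

definition segment_of :: "(nat \<Rightarrow> nat) \<Rightarrow> nat \<Rightarrow> nat \<Rightarrow> nat" where
  "segment_of \<tau> K i = (THE k. k \<in> {1..K+1} \<and> i \<in> seg \<tau> k)"

text \<open>Symmetric transformation of the data set (Z_1,...,Z_n), represented as an (extensional)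
  function on {1..n}.\<close>
definition symmetric_transformation ::
  "'z measure \<Rightarrow> nat \<Rightarrow> ('z \<Rightarrow> (nat \<Rightarrow> 'z) \<Rightarrow> real) \<Rightarrow> bool" where
  "symmetric_transformation M n S \<longleftrightarrow>
     (\<lambda>(z, D). S z D) \<in> borel_measurable (M \<Otimes>\<^sub>M PiM {1..n} (\<lambda>_. M)) \<and>
     (\<forall>z D \<pi>. \<pi> permutes {1..n} \<longrightarrow> S z (D \<circ> \<pi>) = S z D)"

text \<open>Joint probability space of data and noise: data law Pi_i L_i, noise i.i.d. N(0,1),
  independent of the data. Outcomes are pairs (Z, e).\<close>
definition sample_space :: "nat \<Rightarrow> (nat \<Rightarrow> 'z measure) \<Rightarrow> ((nat \<Rightarrow> 'z) \<times> (nat \<Rightarrow> real)) measure" where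
  "sample_space n L = PiM {1..n} L \<Otimes>\<^sub>M PiM {1..n} (\<lambda>_. density lborel std_normal_density)"

definition score :: "('z \<Rightarrow> (nat \<Rightarrow> 'z) \<Rightarrow> real) \<Rightarrow> real \<Rightarrow> (nat \<Rightarrow> 'z) \<times> (nat \<Rightarrow> real) \<Rightarrow> nat \<Rightarrow> real" where
  "score S \<epsilon> \<omega> i = S (fst \<omega> i) (fst \<omega>) + \<epsilon> * snd \<omega> i"

definition seg_rank :: "('z \<Rightarrow> (nat \<Rightarrow> 'z) \<Rightarrow> real) \<Rightarrow> real \<Rightarrow> (nat \<Rightarrow> nat) \<Rightarrow> nat \<Rightarrow>
    (nat \<Rightarrow> 'z) \<times> (nat \<Rightarrow> real) \<Rightarrow> nat \<Rightarrow> nat" where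
  "seg_rank S \<epsilon> \<tau> k \<omega> i = card {j \<in> seg \<tau> k. score S \<epsilon> \<omega> j \<le> score S \<epsilon> \<omega> i}"

definition rank_vec :: "('z \<Rightarrow> (nat \<Rightarrow> 'z) \<Rightarrow> real) \<Rightarrow> real \<Rightarrow> (nat \<Rightarrow> nat) \<Rightarrow> nat \<Rightarrow>
    (nat \<Rightarrow> 'z) \<times> (nat \<Rightarrow> real) \<Rightarrow> nat \<Rightarrow> nat" where
  "rank_vec S \<epsilon> \<tau> k \<omega> = (\<lambda>i\<in>seg \<tau> k. seg_rank S \<epsilon> \<tau> k \<omega> i)"

definition concat_rank :: "('z \<Rightarrow> (nat \<Rightarrow> 'z) \<Rightarrow> real) \<Rightarrow> real \<Rightarrow> (nat \<Rightarrow> nat) \<Rightarrow> nat \<Rightarrow> nat \<Rightarrow>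
    (nat \<Rightarrow> 'z) \<times> (nat \<Rightarrow> real) \<Rightarrow> nat \<Rightarrow> nat" where
  "concat_rank S \<epsilon> \<tau> K n \<omega> = (\<lambda>i\<in>{1..n}. seg_rank S \<epsilon> \<tau> (segment_of \<tau> K i) \<omega> i)"

end

theory Submission
  imports Defs "HOL-Combinatorics.Permutations"
begin



lemma rank_bij:
  fixes s :: "nat \<Rightarrow> real"
  assumes fin: "finite A" and inj: "inj_on s A"
  shows "bij_betw (\<lambda>i. card {j\<in>A. s j \<le> s i}) A {1..card A}"
proof -
  let ?r = "\<lambda>i. card {j\<in>A. s j \<le> s i}"
  have inj_r: "inj_on ?r A"
  proof (rule inj_onI)
    fix x y assume x: "x \<in> A" and y: "y \<in> A" and eq: "?r x = ?r y"
    show "x = y"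
    proof (rule ccontr)
      assume "x \<noteq> y"
      then have ne: "s x \<noteq> s y" using inj x y by (auto dest: inj_onD)
      show False
      proof (cases "s x < s y")
        case True
        have "{j\<in>A. s j \<le> s x} \<subset> {j\<in>A. s j \<le> s y}" using True y by force
        then have "?r x < ?r y" using fin by (intro psubset_card_mono) auto
        then show False using eq by simp
      next
        case False
        then have lt: "s y < s x" using ne by simp
        have "{j\<in>A. s j \<le> s y} \<subset> {j\<in>A. s j \<le> s x}" using lt x by force
        then have "?r y < ?r x" using fin by (intro psubset_card_mono) auto
        then show False using eq by simp
      qed
    qed
  qed
  have sub: "?r ` A \<subseteq> {1..card A}"
  proof
    fix y assume "y \<in> ?r ` A"
    then obtain i where i: "i \<in> A" and y: "y = ?r i" by auto
    have "i \<in> {j\<in>A. s j \<le> s i}" using i by simp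
    then have "?r i \<ge> 1" using fin by (metis (no_types, lifting) One_nat_def Suc_leI card_gt_0_iff empty_iff finite_subset mem_Collect_eq subsetI)
    moreover have "?r i \<le> card A" using fin by (intro card_mono) auto
    ultimately show "y \<in> {1..card A}" using y by simp
  qed
  have "card (?r ` A) = card A" using card_image[OF inj_r] .
  then have "?r ` A = {1..card A}" using sub by (intro card_subset_eq) auto
  then show ?thesis using inj_r by (simp add: bij_betw_def)
qed

lemma singleton_PiM:
  assumes "finite I" "x \<in> space (PiM I M)" "\<And>i. i \<in> I \<Longrightarrow> {x i} \<in> sets (M i)"
  shows "{x} \<in> sets (PiM I M)"
proof -
  have "{x} = PiE I (\<lambda>i. {x i})" using assms(2)
    by (auto simp: space_PiM PiE_def extensional_def Pi_def intro!: ext) metis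
  then show ?thesis using assms sets_PiM_I_finite by metis
qed


locale segs =
  fixes \<tau> :: "nat \<Rightarrow> nat" and K n :: nat
  assumes tau0: "\<tau> 0 = 0" and tauK: "\<tau> (K + 1) = n"
    and tau_mono: "strict_mono_on {0..K+1} \<tau>"
begin

lemma tau_le: "a \<le> K+1 \<Longrightarrow> b \<le> K+1 \<Longrightarrow> (\<tau> a \<le> \<tau> b) = (a \<le> b)"
  using strict_mono_on_less_eq[OF tau_mono] by auto

lemma tau_less: "a \<le> K+1 \<Longrightarrow> b \<le> K+1 \<Longrightarrow> (\<tau> a < \<tau> b) = (a < b)"
  using tau_le by (meson linorder_not_le)

lemma seg_sub: "k \<in> {1..K+1} \<Longrightarrow> seg \<tau> k \<subseteq> {1..n}"
proof
  fix i assume k: "k \<in> {1..K+1}" and i: "i \<in> seg \<tau> k"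
  have "\<tau> k \<le> \<tau> (K+1)" using k tau_le by auto
  then show "i \<in> {1..n}" using i tauK by (auto simp: seg_def)
qed

lemma seg_finite: "finite (seg \<tau> k)"
  by (simp add: seg_def)

lemma seg_unique: "k \<in> {1..K+1} \<Longrightarrow> k' \<in> {1..K+1} \<Longrightarrow> i \<in> seg \<tau> k \<Longrightarrow> i \<in> seg \<tau> k' \<Longrightarrow> k = k'"
proof (rule ccontr)
  assume k: "k \<in> {1..K+1}" "k' \<in> {1..K+1}" and i: "i \<in> seg \<tau> k" "i \<in> seg \<tau> k'" and ne: "k \<noteq> k'"
  show False
  proof (cases "k < k'")
    case True
    then have "\<tau> k \<le> \<tau> (k' - 1)" using k tau_le by auto
    then show False using i by (auto simp: seg_def)
  next
    case False
    then have "\<tau> k' \<le> \<tau> (k - 1)" using k ne tau_le by auto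
    then show False using i by (auto simp: seg_def)
  qed
qed

lemma seg_cover: "i \<in> {1..n} \<Longrightarrow> \<exists>k\<in>{1..K+1}. i \<in> seg \<tau> k"
proof -
  assume i: "i \<in> {1..n}"
  define k where "k = (LEAST k. i \<le> \<tau> k)"
  have ex: "i \<le> \<tau> (K+1)" using i tauK by auto
  have k1: "i \<le> \<tau> k" unfolding k_def by (rule LeastI[of _ "K+1"]) (rule ex)
  have k2: "k \<le> K+1" unfolding k_def by (rule Least_le) (rule ex)
  have k0: "k \<noteq> 0"
  proof
    assume "k = 0" then show False using k1 tau0 i by auto
  qed
  have "\<not> i \<le> \<tau> (k - 1)" unfolding k_def
    by (rule not_less_Least) (use k0 k_def in auto)
  then have "i \<in> seg \<tau> k" using k1 by (auto simp: seg_def)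
  then show ?thesis using k0 k2 by auto
qed

lemma segment_of_eq: "k \<in> {1..K+1} \<Longrightarrow> i \<in> seg \<tau> k \<Longrightarrow> segment_of \<tau> K i = k"
  unfolding segment_of_def
  by (rule the_equality) (auto intro: seg_unique)

lemma segment_of_in: "i \<in> {1..n} \<Longrightarrow> segment_of \<tau> K i \<in> {1..K+1} \<and> i \<in> seg \<tau> (segment_of \<tau> K i)"
  using seg_cover segment_of_eq by metis

end

locale model = segs +
  fixes M :: "'z measure" and S :: "'z \<Rightarrow> (nat \<Rightarrow> 'z) \<Rightarrow> real" and \<epsilon> :: real
    and P :: "nat \<Rightarrow> 'z measure"
  assumes P_prob: "\<And>k. k \<in> {1..K+1} \<Longrightarrow> prob_space (P k)"
    and P_sets: "\<And>k. k \<in> {1..K+1} \<Longrightarrow> sets (P k) = sets M"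
    and S_sym: "symmetric_transformation M n S"
    and eps: "\<epsilon> > 0"
begin

definition L where "L i = P (segment_of \<tau> K i)"
abbreviation NN where "NN \<equiv> density lborel std_normal_density"
definition \<Omega> where "\<Omega> = sample_space n L"

lemma L_prob: "i \<in> {1..n} \<Longrightarrow> prob_space (L i)"
  unfolding L_def using segment_of_in P_prob by auto

lemma L_sets: "i \<in> {1..n} \<Longrightarrow> sets (L i) = sets M"
  unfolding L_def using segment_of_in P_sets by auto

lemma L_space: "i \<in> {1..n} \<Longrightarrow> space (L i) = space M"
  using L_sets sets_eq_imp_space_eq by blast

lemma NN_prob: "prob_space NN"
  by (rule prob_space_normal_density) simp

lemma PL_prob: "prob_space (PiM {1..n} L)"
  by (rule prob_space_PiM) (use L_prob in auto)

lemma PN_prob: "prob_space (PiM {1..n} (\<lambda>_. NN))"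
  by (rule prob_space_PiM) (use NN_prob in auto)

lemma \<Omega>_prob: "prob_space \<Omega>"
  unfolding \<Omega>_def sample_space_def
  using prob_space_pair[OF PL_prob PN_prob] by simp

lemma sets_PL: "sets (PiM {1..n} L) = sets (PiM {1..n} (\<lambda>_. M))"
  by (rule sets_PiM_cong) (auto simp: L_sets)

lemma space_PL: "space (PiM {1..n} L) = PiE {1..n} (\<lambda>_. space M)"
  unfolding space_PiM by (rule PiE_cong) (simp add: L_space)

lemma space_\<Omega>: "space \<Omega> = PiE {1..n} (\<lambda>_. space M) \<times> PiE {1..n} (\<lambda>_. UNIV)"
  unfolding \<Omega>_def sample_space_def space_pair_measure space_PL by (simp add: space_PiM)

lemma S_meas: "(\<lambda>(z, D). S z D) \<in> borel_measurable (M \<Otimes>\<^sub>M PiM {1..n} (\<lambda>_. M))"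
  using S_sym unfolding symmetric_transformation_def by auto

lemma score_meas: "i \<in> {1..n} \<Longrightarrow> (\<lambda>\<omega>. score S \<epsilon> \<omega> i) \<in> borel_measurable \<Omega>"
proof -
  assume i: "i \<in> {1..n}"
  have f1: "(\<lambda>\<omega>. fst \<omega> i) \<in> measurable \<Omega> M"
  proof -
    have "(\<lambda>\<omega>. fst \<omega> i) \<in> measurable \<Omega> (L i)"
      unfolding \<Omega>_def sample_space_def using i by measurable
    then show ?thesis using L_sets[OF i] measurable_cong_sets by blast
  qed
  have f2: "(\<lambda>\<omega>. fst \<omega>) \<in> measurable \<Omega> (PiM {1..n} (\<lambda>_. M))"
  proof -
    have "(\<lambda>\<omega>. fst \<omega>) \<in> measurable \<Omega> (PiM {1..n} L)"
      unfolding \<Omega>_def sample_space_def by measurable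
    then show ?thesis using sets_PL measurable_cong_sets by blast
  qed
  have "(\<lambda>\<omega>. (fst \<omega> i, fst \<omega>)) \<in> measurable \<Omega> (M \<Otimes>\<^sub>M PiM {1..n} (\<lambda>_. M))"
    using f1 f2 by measurable
  from measurable_comp[OF this S_meas]
  have g: "(\<lambda>\<omega>. S (fst \<omega> i) (fst \<omega>)) \<in> borel_measurable \<Omega>" by (simp add: comp_def)
  have h: "(\<lambda>\<omega>. snd \<omega> i) \<in> borel_measurable \<Omega>"
    unfolding \<Omega>_def sample_space_def using i by measurable
  show ?thesis unfolding score_def using g h by measurable
qed

lemma NN_single: "emeasure NN {a} = 0"
proof -
  have "emeasure NN {a} = (\<integral>\<^sup>+x. ennreal (std_normal_density x) * indicator {a} x \<partial>lborel)"
    by (rule emeasure_density) auto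
  also have "\<dots> = 0" by (rule nn_integral_null_set) auto
  finally show ?thesis .
qed

lemma hyper:
  assumes i: "i \<in> {1..n}" and j: "j \<in> {1..n}" and ij: "i \<noteq> j"
  shows "emeasure (PiM {1..n} (\<lambda>_. NN)) {e \<in> space (PiM {1..n} (\<lambda>_. NN)). e i = e j + c} = 0"
proof -
  interpret ps: product_sigma_finite "\<lambda>_. NN"
    unfolding product_sigma_finite_def using NN_prob prob_space_imp_sigma_finite by blast
  define I' where "I' = {1..n} - {i}"
  have ins: "{1..n} = insert i I'" using i I'_def by auto
  have fI: "finite I'" "i \<notin> I'" "j \<in> I'" using I'_def j ij by auto
  have jI[simp]: "j \<in> I'" using fI by simp
  define A where "A = {e \<in> space (PiM (insert i I') (\<lambda>_. NN)). e i = e j + c}"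
  have A_sets: "A \<in> sets (PiM (insert i I') (\<lambda>_. NN))"
    unfolding A_def using fI by measurable
  have "emeasure (PiM (insert i I') (\<lambda>_. NN)) A = (\<integral>\<^sup>+e. indicator A e \<partial>PiM (insert i I') (\<lambda>_. NN))"
    using A_sets by simp
  also have "\<dots> = (\<integral>\<^sup>+ x. (\<integral>\<^sup>+ y. indicator A (x(i := y)) \<partial>NN) \<partial>(PiM I' (\<lambda>_. NN)))"
    by (rule ps.product_nn_integral_insert) (use fI A_sets in auto)
  also have "\<dots> = (\<integral>\<^sup>+ x. 0 \<partial>(PiM I' (\<lambda>_. NN)))"
  proof (rule nn_integral_cong)
    fix x assume x: "x \<in> space (PiM I' (\<lambda>_. NN))"
    have "(\<integral>\<^sup>+ y. indicator A (x(i := y)) \<partial>NN) = (\<integral>\<^sup>+ y. indicator {x j + c} y \<partial>NN)"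
    proof (rule nn_integral_cong)
      fix y
      have "x(i := y) \<in> space (PiM (insert i I') (\<lambda>_. NN))"
        using x fI by (auto simp: space_PiM PiE_def extensional_def)
      then show "indicator A (x(i := y)) = (indicator {x j + c} y :: ennreal)"
        unfolding A_def using fI ij by (auto simp: indicator_def)
    qed
    also have "\<dots> = 0" using NN_single by simp
    finally show "(\<integral>\<^sup>+ y. indicator A (x(i := y)) \<partial>NN) = 0" .
  qed
  also have "\<dots> = 0" by simp
  finally show ?thesis unfolding A_def ins .
qed

lemma no_tie:
  assumes i: "i \<in> {1..n}" and j: "j \<in> {1..n}" and ij: "i \<noteq> j"
  shows "AE \<omega> in \<Omega>. score S \<epsilon> \<omega> i \<noteq> score S \<epsilon> \<omega> j"
proof (rule AE_I')
  define T where "T = {\<omega> \<in> space \<Omega>. score S \<epsilon> \<omega> i = score S \<epsilon> \<omega> j}"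
  show "{\<omega> \<in> space \<Omega>. \<not> score S \<epsilon> \<omega> i \<noteq> score S \<epsilon> \<omega> j} \<subseteq> T" unfolding T_def by auto
  have Ts: "T \<in> sets \<Omega>" unfolding T_def using score_meas[OF i] score_meas[OF j] by measurable
  interpret PN: prob_space "PiM {1..n} (\<lambda>_. NN)" by (rule PN_prob)
  have "emeasure \<Omega> T = (\<integral>\<^sup>+Z. emeasure (PiM {1..n} (\<lambda>_. NN)) (Pair Z -` T) \<partial>(PiM {1..n} L))"
    unfolding \<Omega>_def sample_space_def
    by (rule PN.emeasure_pair_measure_alt) (use Ts in \<open>simp add: \<Omega>_def sample_space_def\<close>)
  also have "\<dots> = (\<integral>\<^sup>+Z. 0 \<partial>(PiM {1..n} L))"
  proof (rule nn_integral_cong)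
    fix Z assume Z: "Z \<in> space (PiM {1..n} L)"
    define c where "c = (S (Z j) Z - S (Z i) Z) / \<epsilon>"
    have "Pair Z -` T = {e \<in> space (PiM {1..n} (\<lambda>_. NN)). e i = e j + c}"
      using Z eps unfolding T_def c_def space_\<Omega> space_PL
      by (auto simp: score_def space_PiM field_simps)
    then show "emeasure (PiM {1..n} (\<lambda>_. NN)) (Pair Z -` T) = 0"
      using hyper[OF i j ij] by simp
  qed
  also have "\<dots> = 0" by simp
  finally show "T \<in> null_sets \<Omega>" using Ts by auto
qed

end


context segs begin

definition Perm where
  "Perm k = {f \<in> seg \<tau> k \<rightarrow>\<^sub>E (UNIV::nat set). bij_betw f (seg \<tau> k) {1..card (seg \<tau> k)}}"
definition PP where "PP = PiE {1..K+1} Perm"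
abbreviation NW where "NW \<equiv> PiM {1..K+1} (\<lambda>k. PiM (seg \<tau> k) (\<lambda>_. count_space (UNIV::nat set)))"

definition segperm where
  "segperm \<pi> \<longleftrightarrow> \<pi> permutes {1..n} \<and> (\<forall>k\<in>{1..K+1}. bij_betw \<pi> (seg \<tau> k) (seg \<tau> k))"
definition act :: "(nat \<Rightarrow> nat) \<Rightarrow> (nat \<Rightarrow> nat \<Rightarrow> nat) \<Rightarrow> nat \<Rightarrow> nat \<Rightarrow> nat" where
  "act \<pi> p = (\<lambda>k\<in>{1..K+1}. \<lambda>i\<in>seg \<tau> k. p k (\<pi> i))"

lemma space_NW: "space NW = PiE {1..K+1} (\<lambda>k. seg \<tau> k \<rightarrow>\<^sub>E UNIV)"
  by (simp add: space_PiM)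

lemma Perm_sub: "Perm k \<subseteq> seg \<tau> k \<rightarrow>\<^sub>E {1..card (seg \<tau> k)}"
  unfolding Perm_def by (auto simp: bij_betw_def PiE_def Pi_def)

lemma finite_PP: "finite PP"
  unfolding PP_def
  by (intro finite_PiE) (auto intro: finite_subset[OF Perm_sub] finite_PiE seg_finite)

lemma PP_space: "PP \<subseteq> space NW"
  unfolding PP_def space_NW Perm_def by (auto simp: PiE_def Pi_def)

lemma single_NW: "p \<in> space NW \<Longrightarrow> {p} \<in> sets NW"
  by (rule singleton_PiM) (auto simp: space_NW seg_finite intro!: singleton_PiM simp: space_PiM)

lemma segs_bij:
  assumes b: "\<And>k. k \<in> {1..K+1} \<Longrightarrow> bij_betw \<pi> (seg \<tau> k) (seg \<tau> k)"
  shows "bij_betw \<pi> {1..n} {1..n}"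
proof -
  have U: "{1..n} = (\<Union>k\<in>{1..K+1}. seg \<tau> k)"
    using seg_sub seg_cover by blast
  have "inj_on \<pi> {1..n}"
  proof (rule inj_onI)
    fix x y assume x: "x \<in> {1..n}" and y: "y \<in> {1..n}" and e: "\<pi> x = \<pi> y"
    obtain kx where kx: "kx \<in> {1..K+1}" "x \<in> seg \<tau> kx" using seg_cover x by blast
    obtain ky where ky: "ky \<in> {1..K+1}" "y \<in> seg \<tau> ky" using seg_cover y by blast
    have "\<pi> x \<in> seg \<tau> kx" using b[OF kx(1)] kx(2) bij_betwE by blast
    moreover have "\<pi> y \<in> seg \<tau> ky" using b[OF ky(1)] ky(2) bij_betwE by blast
    ultimately have "kx = ky" using e kx ky seg_unique by metis
    then show "x = y" using b[OF kx(1)] kx ky e by (auto simp: bij_betw_def dest: inj_onD)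
  qed
  moreover have "\<pi> ` {1..n} = {1..n}"
    unfolding U image_UN using b by (simp add: bij_betw_def)
  ultimately show ?thesis by (simp add: bij_betw_def)
qed

lemma act_inj:
  assumes s: "segperm \<pi>" and p1: "p1 \<in> space NW" and p2: "p2 \<in> space NW"
    and e: "act \<pi> p1 = act \<pi> p2"
  shows "p1 = p2"
proof (rule ext)
  fix k show "p1 k = p2 k"
  proof (cases "k \<in> {1..K+1}")
    case True
    show ?thesis
    proof (rule ext)
      fix i show "p1 k i = p2 k i"
      proof (cases "i \<in> seg \<tau> k")
        case True': True
        have "bij_betw \<pi> (seg \<tau> k) (seg \<tau> k)" using s True unfolding segperm_def by auto
        then obtain j where j: "j \<in> seg \<tau> k" "i = \<pi> j" using True' unfolding bij_betw_def by auto
        have "act \<pi> p1 k j = act \<pi> p2 k j" using e by simp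
        then show ?thesis using j True by (simp add: act_def)
      next
        case False
        have a: "p1 k \<in> seg \<tau> k \<rightarrow>\<^sub>E UNIV" "p2 k \<in> seg \<tau> k \<rightarrow>\<^sub>E UNIV"
          using PiE_mem[OF p1[unfolded space_NW] True] PiE_mem[OF p2[unfolded space_NW] True] by auto
        then show ?thesis using False PiE_arb by metis
      qed
    qed
  next
    case False
    then show ?thesis using PiE_arb[OF p1[unfolded space_NW]] PiE_arb[OF p2[unfolded space_NW]] by metis
  qed
qed

lemma transitive:
  assumes p: "p \<in> PP" and q: "q \<in> PP"
  shows "\<exists>\<pi>. segperm \<pi> \<and> act \<pi> q = p"
proof -
  define \<pi> where "\<pi> i = (if i \<in> {1..n} then inv_into (seg \<tau> (segment_of \<tau> K i)) (q (segment_of \<tau> K i)) (p (segment_of \<tau> K i) i) else i)" for i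
  have pk: "bij_betw (p k) (seg \<tau> k) {1..card (seg \<tau> k)}" if "k \<in> {1..K+1}" for k
    using p that unfolding PP_def Perm_def by auto
  have qk: "bij_betw (q k) (seg \<tau> k) {1..card (seg \<tau> k)}" if "k \<in> {1..K+1}" for k
    using q that unfolding PP_def Perm_def by auto
  have \<pi>k: "\<pi> i = inv_into (seg \<tau> k) (q k) (p k i)" if "k \<in> {1..K+1}" "i \<in> seg \<tau> k" for k i
    using that seg_sub[OF that(1)] segment_of_eq[OF that] unfolding \<pi>_def by auto
  have bk: "bij_betw \<pi> (seg \<tau> k) (seg \<tau> k)" if k: "k \<in> {1..K+1}" for k
  proof -
    have "bij_betw (inv_into (seg \<tau> k) (q k) \<circ> p k) (seg \<tau> k) (seg \<tau> k)"
      using bij_betw_trans[OF pk[OF k] bij_betw_inv_into[OF qk[OF k]]] .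
    then show ?thesis by (rule bij_betw_cong[THEN iffD1, rotated]) (simp add: \<pi>k[OF k])
  qed
  have "\<pi> permutes {1..n}"
    by (rule bij_imp_permutes) (use segs_bij[OF bk] \<pi>_def in auto)
  then have sp: "segperm \<pi>" using bk unfolding segperm_def by auto
  have "act \<pi> q = p"
  proof (rule ext)
    fix k show "act \<pi> q k = p k"
    proof (cases "k \<in> {1..K+1}")
      case True
      show ?thesis
      proof (rule ext)
        fix i show "act \<pi> q k i = p k i"
        proof (cases "i \<in> seg \<tau> k")
          case True': True
          have "p k i \<in> q k ` seg \<tau> k" using pk[OF True] qk[OF True] True'
            by (auto simp: bij_betw_def)
          then have "q k (\<pi> i) = p k i" using \<pi>k[OF True True'] by (simp add: f_inv_into_f)
          then show ?thesis using True True' by (simp add: act_def)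
        next
          case False
          have "p k \<in> Perm k" using p True unfolding PP_def by (rule PiE_mem)
          then have "p k \<in> seg \<tau> k \<rightarrow>\<^sub>E UNIV" by (simp add: Perm_def)
          then have "p k i = undefined" using False by (rule PiE_arb)
          then show ?thesis using False True by (simp add: act_def)
        qed
      qed
    next
      case False
      then show ?thesis using p by (auto simp: act_def PP_def PiE_def extensional_def)
    qed
  qed
  then show ?thesis using sp by blast
qed

end


context model begin

definition W where "W \<omega> = (\<lambda>k\<in>{1..K+1}. rank_vec S \<epsilon> \<tau> k \<omega>)"
definition T where "T \<pi> \<omega> = ((\<lambda>i\<in>{1..n}. fst \<omega> (\<pi> i)), (\<lambda>i\<in>{1..n}. snd \<omega> (\<pi> i)))"
definition notie where "notie \<omega> \<longleftrightarrow> (\<forall>i\<in>{1..n}. \<forall>j\<in>{1..n}. i \<noteq> j \<longrightarrow> score S \<epsilon> \<omega> i \<noteq> score S \<epsilon> \<omega> j)"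

lemma seg_rank_meas:
  assumes k: "k \<in> {1..K+1}" and i: "i \<in> seg \<tau> k"
  shows "(\<lambda>\<omega>. seg_rank S \<epsilon> \<tau> k \<omega> i) \<in> measurable \<Omega> (count_space UNIV)"
  unfolding seg_rank_def
proof (rule measurable_card)
  fix j show "{\<omega> \<in> space \<Omega>. j \<in> {j \<in> seg \<tau> k. score S \<epsilon> \<omega> j \<le> score S \<epsilon> \<omega> i}} \<in> sets \<Omega>"
  proof (cases "j \<in> seg \<tau> k")
    case True
    have ij: "i \<in> {1..n}" "j \<in> {1..n}" using seg_sub[OF k] i True by auto
    have "{\<omega> \<in> space \<Omega>. j \<in> {j \<in> seg \<tau> k. score S \<epsilon> \<omega> j \<le> score S \<epsilon> \<omega> i}}
        = {\<omega> \<in> space \<Omega>. score S \<epsilon> \<omega> j \<le> score S \<epsilon> \<omega> i}" using True by auto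
    also have "\<dots> \<in> sets \<Omega>" using score_meas[OF ij(1)] score_meas[OF ij(2)] by measurable
    finally show ?thesis .
  next
    case False
    then show ?thesis by simp
  qed
qed

lemma W_meas: "W \<in> measurable \<Omega> NW"
  unfolding W_def rank_vec_def
  by (intro measurable_restrict seg_rank_meas) auto

lemma notie_AE: "AE \<omega> in \<Omega>. notie \<omega>"
  unfolding notie_def
proof (intro AE_finite_allI)
  fix i j assume i: "i \<in> {1..n}" and j: "j \<in> {1..n}"
  show "AE \<omega> in \<Omega>. i \<noteq> j \<longrightarrow> score S \<epsilon> \<omega> i \<noteq> score S \<epsilon> \<omega> j"
    using no_tie[OF i j] by (cases "i = j") auto
qed auto

lemma W_PP: "notie \<omega> \<Longrightarrow> W \<omega> \<in> PP"
  unfolding PP_def W_def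
proof (rule PiE_I)
  fix k assume nt: "notie \<omega>" and k: "k \<in> {1..K+1}"
  have inj: "inj_on (score S \<epsilon> \<omega>) (seg \<tau> k)"
    using nt seg_sub[OF k] unfolding notie_def by (auto intro!: inj_onI)
  have "bij_betw (\<lambda>i. seg_rank S \<epsilon> \<tau> k \<omega> i) (seg \<tau> k) {1..card (seg \<tau> k)}"
    unfolding seg_rank_def by (rule rank_bij[OF seg_finite inj])
  then have "bij_betw (rank_vec S \<epsilon> \<tau> k \<omega>) (seg \<tau> k) {1..card (seg \<tau> k)}"
    unfolding rank_vec_def by (rule bij_betw_cong[THEN iffD1, rotated]) simp
  then show "(\<lambda>k\<in>{1..K + 1}. rank_vec S \<epsilon> \<tau> k \<omega>) k \<in> Perm k"
    using k unfolding Perm_def rank_vec_def by auto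
qed auto

lemma segperm_seg:
  assumes s: "segperm \<pi>" and i: "i \<in> {1..n}"
  shows "\<pi> i \<in> {1..n} \<and> segment_of \<tau> K (\<pi> i) = segment_of \<tau> K i"
proof -
  have k: "segment_of \<tau> K i \<in> {1..K+1}" "i \<in> seg \<tau> (segment_of \<tau> K i)" using segment_of_in[OF i] by auto
  have "bij_betw \<pi> (seg \<tau> (segment_of \<tau> K i)) (seg \<tau> (segment_of \<tau> K i))"
    using s k(1) unfolding segperm_def by blast
  then have "\<pi> i \<in> seg \<tau> (segment_of \<tau> K i)" using k(2) by (rule bij_betw_apply)
  then show ?thesis using segment_of_eq[OF k(1)] seg_sub[OF k(1)] by auto
qed

lemma L_pi: "segperm \<pi> \<Longrightarrow> i \<in> {1..n} \<Longrightarrow> L (\<pi> i) = L i"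
  unfolding L_def using segperm_seg by simp

lemma T_meas: assumes s: "segperm \<pi>" shows "T \<pi> \<in> measurable \<Omega> \<Omega>"
proof -
  have f: "(\<lambda>Z. \<lambda>i\<in>{1..n}. Z (\<pi> i)) \<in> measurable (PiM {1..n} L) (PiM {1..n} L)"
  proof (rule measurable_restrict)
    fix i assume i: "i \<in> {1..n}"
    have pi: "\<pi> i \<in> {1..n}" using segperm_seg[OF s i] by blast
    have "(\<lambda>Z. Z (\<pi> i)) \<in> measurable (PiM {1..n} L) (L (\<pi> i))"
      by (rule measurable_component_singleton[OF pi])
    then show "(\<lambda>Z. Z (\<pi> i)) \<in> measurable (PiM {1..n} L) (L i)" using L_pi[OF s i] by simp
  qed
  have g: "(\<lambda>Z. \<lambda>i\<in>{1..n}. Z (\<pi> i)) \<in> measurable (PiM {1..n} (\<lambda>_. NN)) (PiM {1..n} (\<lambda>_. NN))"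
  proof (rule measurable_restrict)
    fix i assume i: "i \<in> {1..n}"
    have pi: "\<pi> i \<in> {1..n}" using segperm_seg[OF s i] by blast
    show "(\<lambda>Z. Z (\<pi> i)) \<in> measurable (PiM {1..n} (\<lambda>_. NN)) NN"
      by (rule measurable_component_singleton[OF pi])
  qed
  show ?thesis unfolding T_def \<Omega>_def sample_space_def
    using f g by measurable
qed

lemma T_distr: assumes s: "segperm \<pi>" shows "distr \<Omega> \<Omega> (T \<pi>) = \<Omega>"
proof -
  have perm: "\<pi> permutes {1..n}" using s unfolding segperm_def by auto
  have inj: "inj_on \<pi> {1..n}" using perm by (meson permutes_inj_on)
  have pfn: "\<pi> \<in> {1..n} \<rightarrow> {1..n}" using segperm_seg[OF s] by auto
  define f where "f = (\<lambda>Z::nat \<Rightarrow> 'z. \<lambda>i\<in>{1..n}. Z (\<pi> i))"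
  define g where "g = (\<lambda>Z::nat \<Rightarrow> real. \<lambda>i\<in>{1..n}. Z (\<pi> i))"
  have df: "distr (PiM {1..n} L) (PiM {1..n} L) f = PiM {1..n} L"
  proof -
    have e: "(\<Pi>\<^sub>M i\<in>{1..n}. L (\<pi> i)) = PiM {1..n} L"
      by (rule PiM_cong) (auto simp: L_pi[OF s])
    have "distr (PiM {1..n} L) (\<Pi>\<^sub>M i\<in>{1..n}. L (\<pi> i)) f = (\<Pi>\<^sub>M i\<in>{1..n}. L (\<pi> i))"
      unfolding f_def by (rule distr_PiM_reindex) (use L_prob inj pfn in auto)
    then show ?thesis unfolding e .
  qed
  have dg: "distr (PiM {1..n} (\<lambda>_. NN)) (PiM {1..n} (\<lambda>_. NN)) g = PiM {1..n} (\<lambda>_. NN)"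
    unfolding g_def by (rule distr_PiM_reindex) (use NN_prob inj pfn in auto)
  have fm: "f \<in> measurable (PiM {1..n} L) (PiM {1..n} L)"
    unfolding f_def
  proof (rule measurable_restrict)
    fix i assume i: "i \<in> {1..n}"
    have pi: "\<pi> i \<in> {1..n}" using segperm_seg[OF s i] by blast
    have "(\<lambda>Z. Z (\<pi> i)) \<in> measurable (PiM {1..n} L) (L (\<pi> i))"
      by (rule measurable_component_singleton[OF pi])
    then show "(\<lambda>Z. Z (\<pi> i)) \<in> measurable (PiM {1..n} L) (L i)" using L_pi[OF s i] by simp
  qed
  have gm: "g \<in> measurable (PiM {1..n} (\<lambda>_. NN)) (PiM {1..n} (\<lambda>_. NN))"
    unfolding g_def
  proof (rule measurable_restrict)
    fix i assume i: "i \<in> {1..n}"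
    have pi: "\<pi> i \<in> {1..n}" using segperm_seg[OF s i] by blast
    show "(\<lambda>Z. Z (\<pi> i)) \<in> measurable (PiM {1..n} (\<lambda>_. NN)) NN"
      by (rule measurable_component_singleton[OF pi])
  qed
  have sf: "sigma_finite_measure (distr (PiM {1..n} (\<lambda>_. NN)) (PiM {1..n} (\<lambda>_. NN)) g)"
    unfolding dg using PN_prob prob_space_imp_sigma_finite by blast
  have "distr (PiM {1..n} L) (PiM {1..n} L) f \<Otimes>\<^sub>M distr (PiM {1..n} (\<lambda>_. NN)) (PiM {1..n} (\<lambda>_. NN)) g
      = distr (PiM {1..n} L \<Otimes>\<^sub>M PiM {1..n} (\<lambda>_. NN)) (PiM {1..n} L \<Otimes>\<^sub>M PiM {1..n} (\<lambda>_. NN)) (\<lambda>(x, y). (f x, g y))"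
    by (rule pair_measure_distr[OF fm gm sf])
  moreover have "(\<lambda>(x, y). (f x, g y)) = T \<pi>"
    unfolding T_def f_def g_def by (auto simp: fun_eq_iff)
  ultimately show ?thesis unfolding df dg \<Omega>_def sample_space_def by simp
qed

lemma score_T:
  assumes s: "segperm \<pi>" and \<omega>: "\<omega> \<in> space \<Omega>" and i: "i \<in> {1..n}"
  shows "score S \<epsilon> (T \<pi> \<omega>) i = score S \<epsilon> \<omega> (\<pi> i)"
proof -
  have perm: "\<pi> permutes {1..n}" using s unfolding segperm_def by auto
  have ext: "fst \<omega> \<in> extensional {1..n}" using \<omega> unfolding space_\<Omega> by (auto simp: PiE_def)
  have e: "(\<lambda>i\<in>{1..n}. fst \<omega> (\<pi> i)) = fst \<omega> \<circ> \<pi>"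
  proof
    fix x show "(\<lambda>i\<in>{1..n}. fst \<omega> (\<pi> i)) x = (fst \<omega> \<circ> \<pi>) x"
      using perm ext by (cases "x \<in> {1..n}") (auto simp: permutes_not_in extensional_def)
  qed
  have "S z (fst \<omega> \<circ> \<pi>) = S z (fst \<omega>)" for z
    using S_sym perm unfolding symmetric_transformation_def by blast
  then show ?thesis unfolding score_def T_def using i e by simp
qed

lemma bij_image_filter:
  assumes b: "bij_betw f A A"
  shows "f ` {x\<in>A. Q (f x)} = {y\<in>A. Q y}"
proof (intro equalityI subsetI)
  fix y assume "y \<in> f ` {x\<in>A. Q (f x)}"
  then obtain x where x: "x \<in> A" "Q (f x)" "y = f x" by blast
  then show "y \<in> {y\<in>A. Q y}" using bij_betw_apply[OF b x(1)] by simp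
next
  fix y assume y: "y \<in> {y\<in>A. Q y}"
  then have "y \<in> f ` A" using b unfolding bij_betw_def by simp
  then obtain x where x: "x \<in> A" "y = f x" by blast
  then show "y \<in> f ` {x\<in>A. Q (f x)}" using y by blast
qed

lemma seg_rank_T:
  assumes s: "segperm \<pi>" and \<omega>: "\<omega> \<in> space \<Omega>" and k: "k \<in> {1..K+1}" and i: "i \<in> seg \<tau> k"
  shows "seg_rank S \<epsilon> \<tau> k (T \<pi> \<omega>) i = seg_rank S \<epsilon> \<tau> k \<omega> (\<pi> i)"
proof -
  have b: "bij_betw \<pi> (seg \<tau> k) (seg \<tau> k)" using s k unfolding segperm_def by blast
  have h: "score S \<epsilon> (T \<pi> \<omega>) j = score S \<epsilon> \<omega> (\<pi> j)" if "j \<in> seg \<tau> k" for j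
    using score_T[OF s \<omega>] seg_sub[OF k] that by blast
  have A: "{j \<in> seg \<tau> k. score S \<epsilon> (T \<pi> \<omega>) j \<le> score S \<epsilon> (T \<pi> \<omega>) i}
      = {j \<in> seg \<tau> k. score S \<epsilon> \<omega> (\<pi> j) \<le> score S \<epsilon> \<omega> (\<pi> i)}"
    using h h[OF i] by (intro Collect_cong) auto
  have B: "\<pi> ` {j \<in> seg \<tau> k. score S \<epsilon> \<omega> (\<pi> j) \<le> score S \<epsilon> \<omega> (\<pi> i)}
      = {j \<in> seg \<tau> k. score S \<epsilon> \<omega> j \<le> score S \<epsilon> \<omega> (\<pi> i)}"
    by (rule bij_image_filter[OF b])
  have C: "inj_on \<pi> {j \<in> seg \<tau> k. score S \<epsilon> \<omega> (\<pi> j) \<le> score S \<epsilon> \<omega> (\<pi> i)}"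
    by (rule inj_on_subset[of _ "seg \<tau> k"]) (use b in \<open>auto simp: bij_betw_def\<close>)
  show ?thesis unfolding seg_rank_def A using card_image[OF C] B by simp
qed

lemma W_T:
  assumes s: "segperm \<pi>" and \<omega>: "\<omega> \<in> space \<Omega>"
  shows "W (T \<pi> \<omega>) = act \<pi> (W \<omega>)"
proof -
  have "\<pi> i \<in> seg \<tau> k" if "k \<in> {1..K+1}" "i \<in> seg \<tau> k" for k i
  proof -
    have "bij_betw \<pi> (seg \<tau> k) (seg \<tau> k)" using s that(1) unfolding segperm_def by blast
    then show ?thesis using that(2) by (rule bij_betw_apply)
  qed
  then show ?thesis
    unfolding W_def act_def rank_vec_def using seg_rank_T[OF s \<omega>]
    by (auto simp: fun_eq_iff)
qed

end


context model begin

definition E where "E p = {\<omega> \<in> space \<Omega>. W \<omega> = p}"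

lemma E_sets: "p \<in> space NW \<Longrightarrow> E p \<in> sets \<Omega>"
proof -
  assume p: "p \<in> space NW"
  have "E p = W -` {p} \<inter> space \<Omega>" unfolding E_def by auto
  then show ?thesis using measurable_sets[OF W_meas single_NW[OF p]] by simp
qed

lemma E_eq:
  assumes p: "p \<in> PP" and q: "q \<in> PP"
  shows "measure \<Omega> (E q) = measure \<Omega> (E p)"
proof -
  obtain \<pi> where s: "segperm \<pi>" and a: "act \<pi> q = p" using transitive[OF p q] by blast
  have Tm: "T \<pi> \<in> measurable \<Omega> \<Omega>" by (rule T_meas[OF s])
  have "E q = T \<pi> -` E p \<inter> space \<Omega>"
  proof (intro equalityI subsetI)
    fix \<omega> assume "\<omega> \<in> E q"
    then have \<omega>: "\<omega> \<in> space \<Omega>" "W \<omega> = q" unfolding E_def by auto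
    have "T \<pi> \<omega> \<in> space \<Omega>" using measurable_space[OF Tm \<omega>(1)] .
    moreover have "W (T \<pi> \<omega>) = p" using W_T[OF s \<omega>(1)] \<omega>(2) a by simp
    ultimately show "\<omega> \<in> T \<pi> -` E p \<inter> space \<Omega>" using \<omega> unfolding E_def by auto
  next
    fix \<omega> assume "\<omega> \<in> T \<pi> -` E p \<inter> space \<Omega>"
    then have \<omega>: "\<omega> \<in> space \<Omega>" "W (T \<pi> \<omega>) = p" unfolding E_def by auto
    have "act \<pi> (W \<omega>) = act \<pi> q" using W_T[OF s \<omega>(1)] \<omega>(2) a by simp
    then have "W \<omega> = q"
      by (rule act_inj[OF s measurable_space[OF W_meas \<omega>(1)] subsetD[OF PP_space q]])
    then show "\<omega> \<in> E q" using \<omega> unfolding E_def by auto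
  qed
  then have "measure \<Omega> (E q) = measure (distr \<Omega> \<Omega> (T \<pi>)) (E p)"
    using measure_distr[OF Tm E_sets[OF subsetD[OF PP_space p]]] by simp
  then show ?thesis using T_distr[OF s] by simp
qed

lemma law:
  assumes B: "B \<in> sets NW"
  shows "measure \<Omega> (W -` B \<inter> space \<Omega>) = real (card (B \<inter> PP)) / real (card PP)"
proof -
  interpret prob_space \<Omega> by (rule \<Omega>_prob)
  have Es: "E p \<in> sets \<Omega>" if "p \<in> PP" for p using E_sets PP_space that by blast
  have disj: "disjoint_family_on E A" for A unfolding disjoint_family_on_def E_def by auto
  have sum: "measure \<Omega> (\<Union>p\<in>A. E p) = (\<Sum>p\<in>A. measure \<Omega> (E p))" if "A \<subseteq> PP" for A
  proof (rule finite_measure_finite_Union)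
    show "finite A" using finite_subset[OF that finite_PP] .
    show "E ` A \<subseteq> sets \<Omega>" using that Es by blast
    show "disjoint_family_on E A" by (rule disj)
  qed
  have un: "(\<Union>p\<in>A. E p) \<in> sets \<Omega>" if "A \<subseteq> PP" for A
    using that finite_subset[OF that finite_PP] Es by (intro sets.finite_UN) auto
  have AEW: "AE \<omega> in \<Omega>. W \<omega> \<in> PP" using notie_AE by (rule AE_mp) (intro AE_I2 impI W_PP)
  have gen: "measure \<Omega> (W -` B' \<inter> space \<Omega>) = measure \<Omega> (\<Union>p\<in>B' \<inter> PP. E p)" if B': "B' \<in> sets NW" for B'
  proof (rule measure_eq_AE)
    show "AE x in \<Omega>. (x \<in> W -` B' \<inter> space \<Omega>) = (x \<in> (\<Union>p\<in>B' \<inter> PP. E p))"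
    proof (rule AE_mp[OF AEW], rule AE_I2, rule impI)
      fix x assume "x \<in> space \<Omega>" "W x \<in> PP"
      then show "(x \<in> W -` B' \<inter> space \<Omega>) = (x \<in> (\<Union>p\<in>B' \<inter> PP. E p))"
        unfolding E_def by blast
    qed
    show "W -` B' \<inter> space \<Omega> \<in> sets \<Omega>" using measurable_sets[OF W_meas B'] .
    show "(\<Union>p\<in>B' \<inter> PP. E p) \<in> sets \<Omega>" by (rule un) (rule Int_lower2)
  qed
  have "W -` space NW \<inter> space \<Omega> = space \<Omega>" using measurable_space[OF W_meas] by blast
  then have "measure \<Omega> (space \<Omega>) = measure \<Omega> (\<Union>p\<in>space NW \<inter> PP. E p)"
    using gen[OF sets.top] by simp
  then have "1 = measure \<Omega> (\<Union>p\<in>space NW \<inter> PP. E p)" using prob_space by simp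
  also have "space NW \<inter> PP = PP" using PP_space by blast
  also have "measure \<Omega> (\<Union>p\<in>PP. E p) = (\<Sum>p\<in>PP. measure \<Omega> (E p))" using sum[of PP] by blast
  finally have one: "(\<Sum>p\<in>PP. measure \<Omega> (E p)) = 1" by simp
  then have "PP \<noteq> {}" by auto
  then obtain p0 where p0: "p0 \<in> PP" by blast
  have "(\<Sum>p\<in>PP. measure \<Omega> (E p)) = (\<Sum>p\<in>PP. measure \<Omega> (E p0))"
    by (rule sum.cong[OF refl]) (rule E_eq[OF p0])
  then have "(\<Sum>p\<in>PP. measure \<Omega> (E p)) = real (card PP) * measure \<Omega> (E p0)"
    by simp
  then have cP: "real (card PP) * measure \<Omega> (E p0) = 1" using one by simp
  then have cPP: "card PP \<noteq> 0" by (metis mult_zero_left of_nat_0 zero_neq_one)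
  have c: "measure \<Omega> (E p0) = 1 / real (card PP)"
    using cP cPP by (simp add: eq_divide_eq mult.commute)
  have "measure \<Omega> (W -` B \<inter> space \<Omega>) = (\<Sum>p\<in>B \<inter> PP. measure \<Omega> (E p))"
    using gen[OF B] sum[of "B \<inter> PP"] by simp
  also have "\<dots> = (\<Sum>p\<in>B \<inter> PP. measure \<Omega> (E p0))"
    by (rule sum.cong[OF refl]) (rule E_eq[OF p0], simp)
  also have "\<dots> = real (card (B \<inter> PP)) * measure \<Omega> (E p0)"
    by simp
  finally show ?thesis using c by simp
qed

end


context segs begin

lemma Perm_ne: "Perm k \<noteq> {}"
proof -
  have "bij_betw (\<lambda>i. card {j\<in>seg \<tau> k. real j \<le> real i}) (seg \<tau> k) {1..card (seg \<tau> k)}"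
    by (rule rank_bij[OF seg_finite]) (auto intro: inj_onI)
  then have "bij_betw (restrict (\<lambda>i. card {j\<in>seg \<tau> k. real j \<le> real i}) (seg \<tau> k)) (seg \<tau> k) {1..card (seg \<tau> k)}"
    by (rule bij_betw_cong[THEN iffD1, rotated]) simp
  then have "restrict (\<lambda>i. card {j\<in>seg \<tau> k. real j \<le> real i}) (seg \<tau> k) \<in> Perm k"
    unfolding Perm_def by auto
  then show ?thesis by blast
qed

lemma finite_Perm: "finite (Perm k)"
  by (rule finite_subset[OF Perm_sub]) (auto intro: finite_PiE seg_finite)

lemma PP_ratio:
  assumes J: "J \<subseteq> {1..K+1}" and D: "\<And>k. k \<in> J \<Longrightarrow> D k \<subseteq> Perm k"
  shows "real (card (PiE {1..K+1} (\<lambda>k. if k \<in> J then D k else Perm k))) / real (card PP)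
       = (\<Prod>k\<in>J. real (card (D k)) / real (card (Perm k)))"
proof -
  have c0: "real (card (Perm k)) \<noteq> 0" for k
    using Perm_ne finite_Perm by auto
  have e1: "real (card (PiE {1..K+1} (\<lambda>k. if k \<in> J then D k else Perm k)))
      = (\<Prod>k\<in>{1..K+1}. real (card (if k \<in> J then D k else Perm k)))"
    by (simp only: card_PiE[OF finite_atLeastAtMost] of_nat_prod)
  have e2: "real (card PP) = (\<Prod>k\<in>{1..K+1}. real (card (Perm k)))"
    unfolding PP_def by (simp only: card_PiE[OF finite_atLeastAtMost] of_nat_prod)
  have "real (card (PiE {1..K+1} (\<lambda>k. if k \<in> J then D k else Perm k))) / real (card PP)
      = (\<Prod>k\<in>{1..K+1}. real (card (if k \<in> J then D k else Perm k)) / real (card (Perm k)))"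
    by (simp only: e1 e2 prod_dividef)
  also have "\<dots> = (\<Prod>k\<in>{1..K+1}. if k \<in> J then real (card (D k)) / real (card (Perm k)) else 1)"
  proof (rule prod.cong[OF refl])
    fix k show "real (card (if k \<in> J then D k else Perm k)) / real (card (Perm k))
       = (if k \<in> J then real (card (D k)) / real (card (Perm k)) else 1)"
      using c0[of k] by (cases "k \<in> J") simp_all
  qed
  also have "\<dots> = (\<Prod>k\<in>{1..K+1} \<inter> J. real (card (D k)) / real (card (Perm k)))"
    using prod.inter_restrict[OF finite_atLeastAtMost, of "\<lambda>k. real (card (D k)) / real (card (Perm k))" 1 "K+1" J]
    by simp
  also have "{1..K+1} \<inter> J = J" using J by blast
  finally show ?thesis .
qed

definition glue :: "(nat \<Rightarrow> nat \<Rightarrow> nat) \<Rightarrow> nat \<Rightarrow> nat" where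
  "glue p = (\<lambda>i\<in>{1..n}. p (segment_of \<tau> K i) i)"

lemma glue_meas: "glue \<in> measurable NW (PiM {1..n} (\<lambda>_. count_space UNIV))"
  unfolding glue_def
proof (rule measurable_restrict)
  fix i assume i: "i \<in> {1..n}"
  have k: "segment_of \<tau> K i \<in> {1..K+1}" "i \<in> seg \<tau> (segment_of \<tau> K i)" using segment_of_in[OF i] by auto
  have "(\<lambda>p. p (segment_of \<tau> K i)) \<in> measurable NW (PiM (seg \<tau> (segment_of \<tau> K i)) (\<lambda>_. count_space UNIV))"
    by (rule measurable_component_singleton[OF k(1)])
  moreover have "(\<lambda>q. q i) \<in> measurable (PiM (seg \<tau> (segment_of \<tau> K i)) (\<lambda>_. count_space UNIV)) (count_space UNIV)"
    by (rule measurable_component_singleton[OF k(2)])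
  ultimately have "(\<lambda>q. q i) \<circ> (\<lambda>p. p (segment_of \<tau> K i)) \<in> measurable NW (count_space UNIV)"
    by (rule measurable_comp)
  then show "(\<lambda>p. p (segment_of \<tau> K i) i) \<in> measurable NW (count_space UNIV)"
    unfolding comp_def .
qed

end

context model begin

lemma concat_eq: "concat_rank S \<epsilon> \<tau> K n \<omega> = glue (W \<omega>)"
proof
  fix i show "concat_rank S \<epsilon> \<tau> K n \<omega> i = glue (W \<omega>) i"
  proof (cases "i \<in> {1..n}")
    case True
    have k: "segment_of \<tau> K i \<in> {1..K+1}" "i \<in> seg \<tau> (segment_of \<tau> K i)" using segment_of_in[OF True] by auto
    have c: "concat_rank S \<epsilon> \<tau> K n \<omega> i = seg_rank S \<epsilon> \<tau> (segment_of \<tau> K i) \<omega> i"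
      unfolding concat_rank_def using True by simp
    have g: "glue (W \<omega>) i = W \<omega> (segment_of \<tau> K i) i"
      unfolding glue_def using True by simp
    have w: "W \<omega> (segment_of \<tau> K i) i = seg_rank S \<epsilon> \<tau> (segment_of \<tau> K i) \<omega> i"
      unfolding W_def rank_vec_def using k by simp
    show ?thesis using c g w by simp
  next
    case False
    have c: "concat_rank S \<epsilon> \<tau> K n \<omega> i = undefined"
      unfolding concat_rank_def by (simp only: restrict_apply False if_False)
    have g: "glue (W \<omega>) i = undefined"
      unfolding glue_def by (simp only: restrict_apply False if_False)
    show ?thesis using c g by simp
  qed
qed

lemma concat_law:
  assumes A: "A \<in> sets (PiM {1..n} (\<lambda>_. count_space UNIV))"
  shows "emeasure (distr \<Omega> (PiM {1..n} (\<lambda>_. count_space UNIV)) (concat_rank S \<epsilon> \<tau> K n)) A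
       = ennreal (real (card ((glue -` A \<inter> space NW) \<inter> PP)) / real (card PP))"
proof -
  interpret prob_space \<Omega> by (rule \<Omega>_prob)
  have cm: "concat_rank S \<epsilon> \<tau> K n \<in> measurable \<Omega> (PiM {1..n} (\<lambda>_. count_space UNIV))"
  proof -
    have "(\<lambda>\<omega>. glue (W \<omega>)) \<in> measurable \<Omega> (PiM {1..n} (\<lambda>_. count_space UNIV))"
      using measurable_comp[OF W_meas glue_meas] by (simp add: comp_def)
    then show ?thesis using concat_eq by presburger
  qed
  have B: "glue -` A \<inter> space NW \<in> sets NW" using measurable_sets[OF glue_meas A] .
  have "concat_rank S \<epsilon> \<tau> K n -` A \<inter> space \<Omega> = W -` (glue -` A \<inter> space NW) \<inter> space \<Omega>"
    using measurable_space[OF W_meas] concat_eq by auto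
  then have "emeasure (distr \<Omega> (PiM {1..n} (\<lambda>_. count_space UNIV)) (concat_rank S \<epsilon> \<tau> K n)) A
      = emeasure \<Omega> (W -` (glue -` A \<inter> space NW) \<inter> space \<Omega>)"
    using emeasure_distr[OF cm A] by simp
  also have "\<dots> = ennreal (measure \<Omega> (W -` (glue -` A \<inter> space NW) \<inter> space \<Omega>))"
    by (rule emeasure_eq_measure)
  also have "\<dots> = ennreal (real (card ((glue -` A \<inter> space NW) \<inter> PP)) / real (card PP))"
    using law[OF B] by simp
  finally show ?thesis .
qed

lemma rv_meas: "k \<in> {1..K+1} \<Longrightarrow> rank_vec S \<epsilon> \<tau> k \<in> measurable \<Omega> (PiM (seg \<tau> k) (\<lambda>_. count_space UNIV))"
  unfolding rank_vec_def by (intro measurable_restrict seg_rank_meas) auto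

lemma indep:
  "prob_space.indep_vars \<Omega> (\<lambda>k. PiM (seg \<tau> k) (\<lambda>_. count_space UNIV)) (\<lambda>k. rank_vec S \<epsilon> \<tau> k) {1..K+1}"
proof -
  interpret prob_space \<Omega> by (rule \<Omega>_prob)
  let ?N = "\<lambda>k. PiM (seg \<tau> k) (\<lambda>_. count_space (UNIV::nat set))"
  let ?F = "\<lambda>k. {rank_vec S \<epsilon> \<tau> k -` A \<inter> space \<Omega> | A. A \<in> sets (?N k)}"
  have Wk: "W \<omega> k = rank_vec S \<epsilon> \<tau> k \<omega>" if "k \<in> {1..K+1}" for \<omega> k
    using that unfolding W_def by simp
  have Wsp: "W \<omega> \<in> space NW" if "\<omega> \<in> space \<Omega>" for \<omega>
    using measurable_space[OF W_meas that] .
  have box: "measure \<Omega> (\<Inter>j\<in>J. rank_vec S \<epsilon> \<tau> j -` B j \<inter> space \<Omega>)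
      = (\<Prod>k\<in>J. real (card (B k \<inter> Perm k)) / real (card (Perm k)))"
    if J: "J \<subseteq> {1..K+1}" "J \<noteq> {}" and B: "\<And>j. j \<in> J \<Longrightarrow> B j \<in> sets (?N j)" for J B
  proof -
    define Box where "Box = PiE {1..K+1} (\<lambda>k. if k \<in> J then B k else space (?N k))"
    have Bsp: "B j \<subseteq> space (?N j)" if "j \<in> J" for j using B[OF that] sets.sets_into_space by blast
    have Boxs: "Box \<in> sets NW" unfolding Box_def
      by (rule sets_PiM_I_finite) (auto simp: B)
    have eq: "(\<Inter>j\<in>J. rank_vec S \<epsilon> \<tau> j -` B j \<inter> space \<Omega>) = W -` Box \<inter> space \<Omega>"
    proof (intro equalityI subsetI)
      fix \<omega> assume a: "\<omega> \<in> (\<Inter>j\<in>J. rank_vec S \<epsilon> \<tau> j -` B j \<inter> space \<Omega>)"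
      then have \<omega>: "\<omega> \<in> space \<Omega>" using J(2) by blast
      have "W \<omega> \<in> Box" unfolding Box_def
      proof (rule PiE_I)
        fix k assume k: "k \<in> {1..K+1}"
        show "W \<omega> k \<in> (if k \<in> J then B k else space (?N k))"
        proof (cases "k \<in> J")
          case True
          then have "\<omega> \<in> rank_vec S \<epsilon> \<tau> k -` B k \<inter> space \<Omega>" using a by blast
          then show ?thesis using Wk[OF k] True by simp
        next
          case False then show ?thesis using PiE_mem[OF Wsp[OF \<omega>, unfolded space_PiM] k] by (simp add: space_PiM)
        qed
      next
        fix k assume nk: "k \<notin> {1..K+1}" then show "W \<omega> k = undefined" by (simp only: W_def restrict_apply nk if_False)
      qed
      then show "\<omega> \<in> W -` Box \<inter> space \<Omega>" using \<omega> by simp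
    next
      fix \<omega> assume a: "\<omega> \<in> W -` Box \<inter> space \<Omega>"
      show "\<omega> \<in> (\<Inter>j\<in>J. rank_vec S \<epsilon> \<tau> j -` B j \<inter> space \<Omega>)"
      proof
        fix j assume j: "j \<in> J"
        have "W \<omega> j \<in> B j" using a j J(1) unfolding Box_def by (auto dest!: PiE_mem)
        moreover have jI: "j \<in> {1..K+1}" using j J(1) by blast
        ultimately show "\<omega> \<in> rank_vec S \<epsilon> \<tau> j -` B j \<inter> space \<Omega>" using Wk[OF jI, of \<omega>] a by simp
      qed
    qed
    have BoxPP: "Box \<inter> PP = PiE {1..K+1} (\<lambda>k. if k \<in> J then B k \<inter> Perm k else Perm k)"
    proof -
      have ps: "Perm k \<subseteq> space (?N k)" for k unfolding Perm_def by (auto simp: space_PiM)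
      have "Box \<inter> PP = PiE {1..K+1} (\<lambda>k. (if k \<in> J then B k else space (?N k)) \<inter> Perm k)"
        unfolding Box_def PP_def by (rule PiE_Int)
      also have "\<dots> = PiE {1..K+1} (\<lambda>k. if k \<in> J then B k \<inter> Perm k else Perm k)"
      proof (rule PiE_cong)
        fix k show "(if k \<in> J then B k else space (?N k)) \<inter> Perm k = (if k \<in> J then B k \<inter> Perm k else Perm k)"
          using ps[of k] by (cases "k \<in> J") auto
      qed
      finally show ?thesis .
    qed
    have "measure \<Omega> (\<Inter>j\<in>J. rank_vec S \<epsilon> \<tau> j -` B j \<inter> space \<Omega>) = real (card (Box \<inter> PP)) / real (card PP)"
      unfolding eq by (rule law[OF Boxs])
    also have "\<dots> = (\<Prod>k\<in>J. real (card (B k \<inter> Perm k)) / real (card (Perm k)))"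
      unfolding BoxPP by (rule PP_ratio[OF J(1)]) auto
    finally show ?thesis .
  qed
  show ?thesis
    unfolding indep_vars_def2
  proof (intro conjI ballI)
    fix k assume "k \<in> {1..K+1}" then show "random_variable (?N k) (rank_vec S \<epsilon> \<tau> k)" by (rule rv_meas)
  next
    show "indep_sets ?F {1..K+1}"
      unfolding indep_sets_def
    proof (intro conjI ballI allI impI)
      fix k assume k: "k \<in> {1..K+1}"
      show "?F k \<subseteq> events" using measurable_sets[OF rv_meas[OF k]] by blast
    next
      fix J A assume J: "J \<subseteq> {1..K+1}" "J \<noteq> {}" "finite J" and A: "A \<in> Pi J ?F"
      have "\<forall>j\<in>J. \<exists>B. B \<in> sets (?N j) \<and> A j = rank_vec S \<epsilon> \<tau> j -` B \<inter> space \<Omega>"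
        using A by (auto simp: Pi_def)
      then obtain B where B: "\<And>j. j \<in> J \<Longrightarrow> B j \<in> sets (?N j) \<and> A j = rank_vec S \<epsilon> \<tau> j -` B j \<inter> space \<Omega>"
        by metis
      have eqA: "(\<Inter>j\<in>J. A j) = (\<Inter>j\<in>J. rank_vec S \<epsilon> \<tau> j -` B j \<inter> space \<Omega>)"
        by (rule INF_cong[OF refl]) (use B in blast)
      have "prob (\<Inter>j\<in>J. A j) = prob (\<Inter>j\<in>J. rank_vec S \<epsilon> \<tau> j -` B j \<inter> space \<Omega>)"
        unfolding eqA ..
      also have "\<dots> = (\<Prod>k\<in>J. real (card (B k \<inter> Perm k)) / real (card (Perm k)))"
        by (rule box[OF J(1,2)]) (use B in blast)
      also have "\<dots> = (\<Prod>j\<in>J. prob (A j))"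
      proof (rule prod.cong[OF refl])
        fix j assume j: "j \<in> J"
        have "prob (A j) = prob (\<Inter>j'\<in>{j}. rank_vec S \<epsilon> \<tau> j' -` B j' \<inter> space \<Omega>)"
          using B[OF j] by simp
        also have "\<dots> = (\<Prod>k\<in>{j}. real (card (B k \<inter> Perm k)) / real (card (Perm k)))"
          by (rule box) (use j J B in auto)
        finally show "real (card (B j \<inter> Perm j)) / real (card (Perm j)) = prob (A j)" by simp
      qed
      finally show "prob (\<Inter>j\<in>J. A j) = (\<Prod>j\<in>J. prob (A j))" .
    qed
  qed
qed

end

theorem lemmaS2:
  fixes M :: "'z measure" and n K :: nat and \<tau> :: "nat \<Rightarrow> nat"
    and P :: "nat \<Rightarrow> 'z measure" and S :: "'z \<Rightarrow> (nat \<Rightarrow> 'z) \<Rightarrow> real" and \<epsilon> :: real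
  assumes tau0: "\<tau> 0 = 0" and tauK: "\<tau> (K + 1) = n"
    and tau_mono: "strict_mono_on {0..K+1} \<tau>"
    and P_prob: "\<And>k. k \<in> {1..K+1} \<Longrightarrow> prob_space (P k)"
    and P_sets: "\<And>k. k \<in> {1..K+1} \<Longrightarrow> sets (P k) = sets M"
    and P_change: "\<And>k. k \<in> {1..K} \<Longrightarrow> P (k + 1) \<noteq> P k"
    and S_sym: "symmetric_transformation M n S"
    and eps: "\<epsilon> > 0"
  shows "prob_space.indep_vars (sample_space n (\<lambda>i. P (segment_of \<tau> K i)))
           (\<lambda>k. PiM (seg \<tau> k) (\<lambda>_. count_space UNIV))
           (\<lambda>k. rank_vec S \<epsilon> \<tau> k) {1..K+1} \<and>
         (\<forall>Q.  prob_space Q \<longrightarrow> sets Q = sets M \<longrightarrow>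
           distr (sample_space n (\<lambda>i. P (segment_of \<tau> K i))) (PiM {1..n} (\<lambda>_. count_space UNIV))
                 (concat_rank S \<epsilon> \<tau> K n)
         = distr (sample_space n (\<lambda>_. Q)) (PiM {1..n} (\<lambda>_. count_space UNIV))
                 (concat_rank S \<epsilon> \<tau> K n))"
proof -
  interpret m1: model \<tau> K n M S \<epsilon> P
    unfolding model_def segs_def model_axioms_def
    using tau0 tauK tau_mono P_prob P_sets S_sym eps by blast
  have O1: "m1.\<Omega> = sample_space n (\<lambda>i. P (segment_of \<tau> K i))"
    unfolding m1.\<Omega>_def by (simp add: m1.L_def[abs_def])
  have part2: "distr (sample_space n (\<lambda>i. P (segment_of \<tau> K i))) (PiM {1..n} (\<lambda>_. count_space UNIV))
                 (concat_rank S \<epsilon> \<tau> K n)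
         = distr (sample_space n (\<lambda>_. Q)) (PiM {1..n} (\<lambda>_. count_space UNIV))
                 (concat_rank S \<epsilon> \<tau> K n)"
    if Q: "prob_space Q" "sets Q = sets M" for Q
  proof -
    interpret m2: model \<tau> K n M S \<epsilon> "\<lambda>_. Q"
      unfolding model_def segs_def model_axioms_def
      using tau0 tauK tau_mono Q S_sym eps by blast
    have O2: "m2.\<Omega> = sample_space n (\<lambda>_. Q)"
      unfolding m2.\<Omega>_def by (simp add: m2.L_def[abs_def])
    show ?thesis
    proof (rule measure_eqI)
      show "sets (distr (sample_space n (\<lambda>i. P (segment_of \<tau> K i))) (PiM {1..n} (\<lambda>_. count_space UNIV)) (concat_rank S \<epsilon> \<tau> K n))
          = sets (distr (sample_space n (\<lambda>_. Q)) (PiM {1..n} (\<lambda>_. count_space UNIV)) (concat_rank S \<epsilon> \<tau> K n))"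
        by simp
    next
      fix A assume "A \<in> sets (distr (sample_space n (\<lambda>i. P (segment_of \<tau> K i))) (PiM {1..n} (\<lambda>_. count_space UNIV)) (concat_rank S \<epsilon> \<tau> K n))"
      then have A: "A \<in> sets (PiM {1..n} (\<lambda>_. count_space UNIV))" by simp
      show "emeasure (distr (sample_space n (\<lambda>i. P (segment_of \<tau> K i))) (PiM {1..n} (\<lambda>_. count_space UNIV)) (concat_rank S \<epsilon> \<tau> K n)) A
          = emeasure (distr (sample_space n (\<lambda>_. Q)) (PiM {1..n} (\<lambda>_. count_space UNIV)) (concat_rank S \<epsilon> \<tau> K n)) A"
        using m1.concat_law[OF A] m2.concat_law[OF A] unfolding O1 O2 by simp
    qed
  qed
  show ?thesis using m1.indep part2 unfolding O1 by blast
qed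


end
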